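(* Assume the random gather-step setting below. Then for every coordinate $i\in\{1,\dots,d\}$ and every choice of the Byzantine vectors $z^{(j)}=z^{(j)}(X)$ as (arbitrary) functions of the delivering configuration $X$, $$\mathbb{E}\big[\Delta_i(\theta_1,\dots,\theta_h)\big]\le\Big(1-\frac{\rho}{4}\Big)\Delta_i(\lambda_1,\dots,\lambda_h),$$ where the expectation is over $X$.
   Context: Median of reals: for $y_1,\dots,y_q\in\mathbb{R}$ with order statistics $y_{(1)}\le\dots\le y_{(q)}$, $\mathrm{median}=y_{((q+1)/2)}$ if $q$ is odd and $\frac12(y_{(q/2)}+y_{(q/2+1)})$ if $q$ is even; $\mathrm{Median}$ of vectors is applied coordinate-wise. Coordinate-wise diameters: $\Delta_i(v_1,\dots,v_h)=\max_{j,k}|v_j[i]-v_k[i]|$, $\Delta=\sum_i\Delta_i$. Random gather-step setting: integers $f\ge1$, $n$, $h=n-f$, and $q$ with $2f+2\le q\le\lfloor h/2\rfloor$; fixed vectors $\lambda_1,\dots,\lambda_h\in\mathbb{R}^d$ held by the correct servers $1,\dots,h$. Let $S_j=\{s\subset\{1,\dots,h\}\setminus\{j\}:|s|\in\{q-f-1,\dots,q-1\}\}$ and $S=\prod_{j=1}^hS_j$. A delivering configuration $X=(X_1,\dots,X_h)$ is a random element of $S$ with $P(X=s)\ge\rho$ for all $s\in S$, for some $\rho>0$. Given $X$, each correct server $j$ receives arbitrary vectors $z^{(j)}_1,\dots,z^{(j)}_{q-1-|X_j|}\in\mathbb{R}^d$ (possibly depending on $X$) and computes $\theta_j=\mathrm{Median}\big(\lambda_j,(\lambda_k)_{k\in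 X_j},z^{(j)}_1,\dots,z^{(j)}_{q-1-|X_j|}\big)$. *)

theory Defs
  imports "HOL-Probability.Probability"
begin

text \<open>Median of a list of reals (order statistics, 1-indexed in the paper):
  odd length q: y_((q+1)/2); even length q: (y_(q/2) + y_(q/2+1)) / 2.\<close>
definition median :: "real list \<Rightarrow> real" where
  "median ys = (let zs = sort ys; q = length ys in
     if odd q then zs ! (q div 2)
     else (zs ! (q div 2 - 1) + zs ! (q div 2)) / 2)"

definition Median :: "(real ^ 'd) list \<Rightarrow> real ^ 'd" where
  "Median vs = (\<chi> i. median (map (\<lambda>v. v $ i) vs))"

definition coord_diam :: "nat \<Rightarrow> (nat \<Rightarrow> real ^ 'd) \<Rightarrow> 'd \<Rightarrow> real" where
  "coord_diam h v i = Max {\<bar>v j $ i - v k $ i\<bar> | j k. j \<in> {1..h} \<and> k \<in> {1..h}}"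

definition diam :: "nat \<Rightarrow> (nat \<Rightarrow> real ^ 'd) \<Rightarrow> real" where
  "diam h v = (\<Sum>i\<in>UNIV. coord_diam h v i)"

definition Sj :: "nat \<Rightarrow> nat \<Rightarrow> nat \<Rightarrow> nat \<Rightarrow> nat set set" where
  "Sj h q f j = {s. s \<subseteq> {1..h} - {j} \<and> q - f - 1 \<le> card s \<and> card s \<le> q - 1}"

definition Sconf :: "nat \<Rightarrow> nat \<Rightarrow> nat \<Rightarrow> (nat \<Rightarrow> nat set) set" where
  "Sconf h q f = (\<Pi>\<^sub>E j\<in>{1..h}. Sj h q f j)"

text \<open>theta_j given configuration X, correct vectors lam, and Byzantine vectors
  z X j m (m < q - 1 - |X_j|).\<close>
definition theta :: "nat \<Rightarrow> (nat \<Rightarrow> real ^ 'd) \<Rightarrow>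
    ((nat \<Rightarrow> nat set) \<Rightarrow> nat \<Rightarrow> nat \<Rightarrow> real ^ 'd) \<Rightarrow> (nat \<Rightarrow> nat set) \<Rightarrow> nat \<Rightarrow> real ^ 'd" where
  "theta q lam z X j = Median ([lam j] @ map lam (sorted_list_of_set (X j))
       @ map (z X j) [0..<q - 1 - card (X j)])"

end

theory Submission
  imports Defs
begin

lemma sorted_nth_ge_aux:
  fixes xs :: "real list"
  assumes "sorted xs" "k < length xs" "length (filter (\<lambda>y. y < a) xs) \<le> k"
  shows "a \<le> xs ! k"
proof (rule ccontr)
  assume "\<not> a \<le> xs ! k"
  then have "\<forall>m\<le>k. xs ! m < a" using assms(1,2)
    by (meson le_less_trans not_le_imp_less order_less_le_trans sorted_nth_mono)
  then have "{0..k} \<subseteq> {m. m < length xs \<and> xs ! m < a}" using assms(2) by auto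
  then have "card {0..k} \<le> card {m. m < length xs \<and> xs ! m < a}"
    by (intro card_mono) auto
  then show False using assms(3) by (simp add: length_filter_conv_card)
qed

lemma sorted_nth_le_aux:
  fixes xs :: "real list"
  assumes "sorted xs" "m < length xs" "length (filter (\<lambda>y. y > b) xs) < length xs - m"
  shows "xs ! m \<le> b"
proof (rule ccontr)
  assume "\<not> xs ! m \<le> b"
  then have "\<forall>k. m \<le> k \<and> k < length xs \<longrightarrow> xs ! k > b" using assms(1,2)
    by (meson less_le_trans not_le_imp_less sorted_nth_mono)
  then have "{m..<length xs} \<subseteq> {k. k < length xs \<and> xs ! k > b}" by auto
  then have "card {m..<length xs} \<le> card {k. k < length xs \<and> xs ! k > b}"
    by (intro card_mono) auto
  then show False using assms(3) by (simp add: length_filter_conv_card)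
qed

lemma length_filter_sort: "length (filter P (sort ys)) = length (filter P ys)"
  by (metis mset_filter mset_sort size_mset)

lemma median_bounds:
  fixes ys :: "real list"
  assumes "length ys = q" "q \<ge> 1"
    and "length (filter (\<lambda>y. y < a) ys) \<le> (q - 1) div 2"
    and "length (filter (\<lambda>y. y > b) ys) \<le> (q - 1) div 2"
  shows "a \<le> median ys \<and> median ys \<le> b"
proof -
  define zs where "zs = sort ys"
  have s: "sorted zs" and l: "length zs = q" using assms(1) by (auto simp: zs_def)
  have c1: "length (filter (\<lambda>y. y < a) zs) \<le> (q - 1) div 2"
    using assms(3) by (simp add: zs_def length_filter_sort)
  have c2: "length (filter (\<lambda>y. y > b) zs) \<le> (q - 1) div 2"
    using assms(4) by (simp add: zs_def length_filter_sort)
  show ?thesis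
  proof (cases "odd q")
    case True
    have "a \<le> zs ! (q div 2)"
      by (rule sorted_nth_ge_aux[OF s]) (use c1 l assms(2) True in \<open>auto elim!: oddE\<close>)
    moreover have "zs ! (q div 2) \<le> b"
      by (rule sorted_nth_le_aux[OF s]) (use c2 l assms(2) True in \<open>auto elim!: oddE\<close>)
    ultimately show ?thesis using True by (simp add: median_def zs_def Let_def assms(1))
  next
    case False
    then obtain r where r: "q = 2 * r" by (auto elim!: evenE)
    with assms(2) have r1: "r \<ge> 1" by simp
    have "a \<le> zs ! (r - 1)"
      by (rule sorted_nth_ge_aux[OF s]) (use c1 l r r1 in \<open>auto\<close>)
    moreover have "a \<le> zs ! r"
      by (rule sorted_nth_ge_aux[OF s]) (use c1 l r r1 in \<open>auto\<close>)
    moreover have "zs ! (r - 1) \<le> b"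
      by (rule sorted_nth_le_aux[OF s]) (use c2 l r r1 in \<open>auto\<close>)
    moreover have "zs ! r \<le> b"
      by (rule sorted_nth_le_aux[OF s]) (use c2 l r r1 in \<open>auto\<close>)
    ultimately show ?thesis using False r by (simp add: median_def zs_def Let_def assms(1))
  qed
qed

lemma theta_bound:
  fixes lam :: "nat \<Rightarrow> real ^ 'd"
  assumes fin: "finite (X j)" and cq: "card (X j) \<le> q - 1" and q1: "q \<ge> 1"
    and lo: "length (filter (\<lambda>y. y < a) (map (\<lambda>k. lam k $ i) (j # sorted_list_of_set (X j))))
              + (q - 1 - card (X j)) \<le> (q - 1) div 2"
    and hi: "length (filter (\<lambda>y. y > b) (map (\<lambda>k. lam k $ i) (j # sorted_list_of_set (X j))))
              + (q - 1 - card (X j)) \<le> (q - 1) div 2"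
  shows "a \<le> theta q lam z X j $ i \<and> theta q lam z X j $ i \<le> b"
proof -
  define A where "A = map (\<lambda>k. lam k $ i) (j # sorted_list_of_set (X j))"
  define B where "B = map (\<lambda>m. z X j m $ i) [0..<q - 1 - card (X j)]"
  have eq: "theta q lam z X j $ i = median (A @ B)"
    by (simp add: theta_def Median_def A_def B_def o_def)
  have len: "length (A @ B) = q" using fin cq q1 by (simp add: A_def B_def)
  have lB: "length B = q - 1 - card (X j)" by (simp add: B_def)
  have "length (filter (\<lambda>y. y < a) (A @ B)) \<le> (q - 1) div 2"
    using lo length_filter_le[of "\<lambda>y. y < a" B] lB unfolding A_def[symmetric] by simp
  moreover have "length (filter (\<lambda>y. y > b) (A @ B)) \<le> (q - 1) div 2"
    using hi length_filter_le[of "\<lambda>y. y > b" B] lB unfolding A_def[symmetric] by simp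
  ultimately show ?thesis using median_bounds[OF len q1] eq by simp
qed

lemma diam_le:
  fixes v :: "nat \<Rightarrow> real ^ 'd"
  assumes "h \<ge> 1" "\<forall>j\<in>{1..h}. a \<le> v j $ i \<and> v j $ i \<le> b"
  shows "coord_diam h v i \<le> b - a"
  unfolding coord_diam_def
proof (rule Max.boundedI)
  show "finite {\<bar>v j $ i - v k $ i\<bar> |j k. j \<in> {1..h} \<and> k \<in> {1..h}}"
    by (rule finite_image_set2) auto
  show "{\<bar>v j $ i - v k $ i\<bar> |j k. j \<in> {1..h} \<and> k \<in> {1..h}} \<noteq> {}" using assms(1) by auto
  show "\<And>x. x \<in> {\<bar>v j $ i - v k $ i\<bar> |j k. j \<in> {1..h} \<and> k \<in> {1..h}} \<Longrightarrow> x \<le> b - a"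
  proof -
    fix x assume "x \<in> {\<bar>v j $ i - v k $ i\<bar> |j k. j \<in> {1..h} \<and> k \<in> {1..h}}"
    then obtain j k where "x = \<bar>v j $ i - v k $ i\<bar>" "j \<in> {1..h}" "k \<in> {1..h}" by blast
    with assms(2) have "a \<le> v j $ i" "v j $ i \<le> b" "a \<le> v k $ i" "v k $ i \<le> b" by auto
    then show "x \<le> b - a" using \<open>x = _\<close> by (simp add: abs_le_iff)
  qed
qed

lemma diam_ge:
  fixes v :: "nat \<Rightarrow> real ^ 'd"
  assumes "j \<in> {1..h}" "k \<in> {1..h}"
  shows "v j $ i - v k $ i \<le> coord_diam h v i"
  unfolding coord_diam_def
proof -
  have "\<bar>v j $ i - v k $ i\<bar> \<le> Max {\<bar>v j $ i - v k $ i\<bar> |j k. j \<in> {1..h} \<and> k \<in> {1..h}}"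
  proof (rule Max_ge)
    show "finite {\<bar>v j $ i - v k $ i\<bar> |j k. j \<in> {1..h} \<and> k \<in> {1..h}}"
      by (rule finite_image_set2) auto
  qed (use assms in auto)
  then show "v j $ i - v k $ i \<le> Max {\<bar>v j $ i - v k $ i\<bar> |j k. j \<in> {1..h} \<and> k \<in> {1..h}}"
    by linarith
qed

lemma filter_cons_le1:
  assumes "\<forall>x\<in>set xs. \<not> P x"
  shows "length (filter P (y # xs)) \<le> 1"
  using assms by simp

theorem mainTheorem5:
  fixes f n h q :: nat and lam :: "nat \<Rightarrow> real ^ 'd" and \<rho> :: real
    and p :: "(nat \<Rightarrow> nat set) pmf"
    and z :: "(nat \<Rightarrow> nat set) \<Rightarrow> nat \<Rightarrow> nat \<Rightarrow> real ^ 'd"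
    and i :: 'd
  assumes "f \<ge> 1" and "h = n - f"
    and "2 * f + 2 \<le> q" and "q \<le> h div 2"
    and "\<rho> > 0"
    and "set_pmf p \<subseteq> Sconf h q f"
    and "\<forall>s\<in>Sconf h q f. pmf p s \<ge> \<rho>"
  shows "measure_pmf.expectation p (\<lambda>X. coord_diam h (theta q lam z X) i)
           \<le> (1 - \<rho> / 4) * coord_diam h lam i"
proof -
  note f1 = assms(1) and fq = assms(3) and qh = assms(4)
  define val where "val k = lam k $ i" for k
  define g where "g X = coord_diam h (theta q lam z X) i" for X
  define D where "D = coord_diam h lam i"
  have q4: "q \<ge> 4" using f1 fq by linarith
  have h2q: "2 * q \<le> h" using qh by linarith
  have h1: "h \<ge> 1" using q4 h2q by linarith
  have qdiv: "f \<le> (q - 1) div 2" "1 \<le> (q - 1) div 2" using fq q4 by linarith+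
  define Mn where "Mn = Min (val ` {1..h})"
  define Mx where "Mx = Max (val ` {1..h})"
  have ne: "val ` {1..h} \<noteq> {}" using h1 by auto
  have rng: "Mn \<le> val k \<and> val k \<le> Mx" if "k \<in> {1..h}" for k
    using that by (auto simp: Mn_def Mx_def)
  obtain kx where kx: "kx \<in> {1..h}" "val kx = Mx"
    using Max_in[OF _ ne] unfolding Mx_def by (metis finite_atLeastAtMost finite_imageI imageE)
  obtain kn where kn: "kn \<in> {1..h}" "val kn = Mn"
    using Min_in[OF _ ne] unfolding Mn_def by (metis finite_atLeastAtMost finite_imageI imageE)
  have DW: "Mx - Mn \<le> D"
    using diam_ge[OF kx(1) kn(1), of lam i] kx kn by (simp add: D_def val_def)
  have W0: "0 \<le> Mx - Mn" using rng[OF kx(1)] kx by simp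

  have Sj_mem: "X j \<subseteq> {1..h} - {j} \<and> finite (X j) \<and> q - f - 1 \<le> card (X j) \<and> card (X j) \<le> q - 1"
    if "X \<in> Sconf h q f" "j \<in> {1..h}" for X j
  proof -
    have "X j \<in> Sj h q f j" using that by (auto simp: Sconf_def PiE_iff)
    then show ?thesis by (auto simp: Sj_def intro: finite_subset)
  qed

  have gen: "g X \<le> Mx - Mn" if X: "X \<in> Sconf h q f" for X
    unfolding g_def
  proof (rule diam_le[OF h1], intro ballI)
    fix j assume j: "j \<in> {1..h}"
    note m = Sj_mem[OF X j]
    have all: "\<forall>k\<in>set (j # sorted_list_of_set (X j)). Mn \<le> val k \<and> val k \<le> Mx"
      using m j rng by auto
    have e1: "filter (\<lambda>y. y < Mn) (map (\<lambda>k. lam k $ i) (j # sorted_list_of_set (X j))) = []"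
      using all by (auto simp: val_def filter_empty_conv)
    have e2: "filter (\<lambda>y. y > Mx) (map (\<lambda>k. lam k $ i) (j # sorted_list_of_set (X j))) = []"
      using all by (auto simp: val_def filter_empty_conv)
    have c: "q - 1 - card (X j) \<le> (q - 1) div 2" using m qdiv by linarith
    show "Mn \<le> theta q lam z X j $ i \<and> theta q lam z X j $ i \<le> Mx"
      by (rule theta_bound) (use m e1 e2 c q4 in auto)
  qed

  define mid where "mid = (Mn + Mx) / 2"
  define L where "L = {k \<in> {1..h}. val k \<le> mid}"
  define U where "U = {k \<in> {1..h}. mid \<le> val k}"
  have "L \<union> U = {1..h}" by (auto simp: L_def U_def)
  then have "h \<le> card L + card U" by (metis card_Un_le card_atLeastAtMost diff_Suc_1)
  then have "q \<le> card L \<or> q \<le> card U" using h2q by linarith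
  then obtain G lo hi where G: "G \<subseteq> {1..h}" "q \<le> card G"
    "\<forall>k\<in>G. lo \<le> val k \<and> val k \<le> hi" "Mn \<le> lo" "hi \<le> Mx" "hi - lo \<le> (Mx - Mn) / 2"
  proof
    assume "q \<le> card L"
    then show thesis
      by (intro that[of L Mn mid]) (use W0 in \<open>auto simp: L_def mid_def rng\<close>)
  next
    assume "q \<le> card U"
    then show thesis
      by (intro that[of U mid Mx]) (use W0 in \<open>auto simp: U_def mid_def rng field_simps\<close>)
  qed
  have finG: "finite G" using G(1) finite_subset by blast
  have exT: "\<exists>T. T \<subseteq> G - {j} \<and> card T = q - 1" for j
  proof -
    have "card G - 1 \<le> card (G - {j})" using finG by (simp add: card_Diff_singleton_if)
    then have "q - 1 \<le> card (G - {j})" using G(2) by linarith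
    then obtain T where "T \<subseteq> G - {j}" "card T = q - 1" by (rule obtain_subset_with_card_n)
    then show ?thesis by blast
  qed
  define s0 where "s0 = (\<lambda>j. if j \<in> {1..h} then (SOME T. T \<subseteq> G - {j} \<and> card T = q - 1) else undefined)"
  have s0j: "s0 j \<subseteq> G - {j} \<and> card (s0 j) = q - 1" if "j \<in> {1..h}" for j
    using someI_ex[OF exT[of j]] that by (simp add: s0_def)
  have s0S: "s0 \<in> Sconf h q f"
    unfolding Sconf_def
  proof (rule PiE_I)
    fix j assume j: "j \<in> {1..h}"
    show "s0 j \<in> Sj h q f j" using s0j[OF j] G(1) by (auto simp: Sj_def)
  next
    fix j assume "j \<notin> {1..h}"
    then show "s0 j = undefined" unfolding s0_def by auto
  qed
  have good: "g s0 \<le> (Mx - Mn) / 2"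
  proof -
    have "g s0 \<le> hi - lo"
      unfolding g_def
    proof (rule diam_le[OF h1], intro ballI)
      fix j assume j: "j \<in> {1..h}"
      note m = s0j[OF j]
      have finj: "finite (s0 j)" using m finG finite_subset by blast
      have all: "\<forall>k\<in>set (sorted_list_of_set (s0 j)). lo \<le> val k \<and> val k \<le> hi"
        using m G(3) finj by auto
      have e1: "length (filter (\<lambda>y. y < lo) (map (\<lambda>k. lam k $ i) (j # sorted_list_of_set (s0 j)))) \<le> 1"
        unfolding list.map by (rule filter_cons_le1) (use all in \<open>auto simp: val_def\<close>)
      have e2: "length (filter (\<lambda>y. y > hi) (map (\<lambda>k. lam k $ i) (j # sorted_list_of_set (s0 j)))) \<le> 1"
        unfolding list.map by (rule filter_cons_le1) (use all in \<open>auto simp: val_def\<close>)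
      show "lo \<le> theta q lam z s0 j $ i \<and> theta q lam z s0 j $ i \<le> hi"
        by (rule theta_bound) (use m finj e1 e2 qdiv q4 in auto)
    qed
    then show ?thesis using G(6) by linarith
  qed

  have finS: "finite (Sconf h q f)"
    unfolding Sconf_def
  proof (rule finite_PiE)
    fix j show "finite (Sj h q f j)"
      by (rule finite_subset[of _ "Pow {1..h}"]) (auto simp: Sj_def)
  qed simp
  have E: "measure_pmf.expectation p g = (\<Sum>a\<in>Sconf h q f. g a * pmf p a)"
    by (rule integral_measure_pmf_real[OF finS]) (use assms(6) in auto)
  have sum1: "(\<Sum>a\<in>Sconf h q f. pmf p a) = 1" by (rule sum_pmf_eq_1[OF finS assms(6)])
  define W where "W = Mx - Mn"
  define r where "r = pmf p s0"
  have r\<rho>: "\<rho> \<le> r" using assms(7) s0S by (simp add: r_def)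
  have r1: "r \<le> 1" by (simp add: r_def pmf_le_1)
  have "(\<Sum>a\<in>Sconf h q f. g a * pmf p a) = g s0 * r + (\<Sum>a\<in>Sconf h q f - {s0}. g a * pmf p a)"
    by (simp add: r_def sum.remove[OF finS s0S])
  also have "\<dots> \<le> W / 2 * r + (\<Sum>a\<in>Sconf h q f - {s0}. W * pmf p a)"
  proof (rule add_mono)
    show "g s0 * r \<le> W / 2 * r" unfolding W_def r_def by (rule mult_right_mono[OF good]) simp
    show "(\<Sum>a\<in>Sconf h q f - {s0}. g a * pmf p a) \<le> (\<Sum>a\<in>Sconf h q f - {s0}. W * pmf p a)"
      by (rule sum_mono) (use gen in \<open>auto simp: W_def intro: mult_right_mono\<close>)
  qed
  also have "(\<Sum>a\<in>Sconf h q f - {s0}. W * pmf p a) = W * (1 - r)"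
    using sum1 by (simp add: sum_distrib_left[symmetric] r_def sum.remove[OF finS s0S])
  also have "W / 2 * r + W * (1 - r) = W * (1 - r / 2)" by (simp add: algebra_simps)
  also have "\<dots> \<le> W * (1 - \<rho> / 4)"
    using W0 r\<rho> assms(5) unfolding W_def by (intro mult_left_mono) auto
  also have "\<dots> \<le> D * (1 - \<rho> / 4)"
    using DW r\<rho> r1 unfolding W_def by (intro mult_right_mono) auto
  finally have "measure_pmf.expectation p g \<le> (1 - \<rho> / 4) * D" using E by (simp add: mult.commute)
  then show ?thesis unfolding g_def[abs_def] D_def .
qed

end
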